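(* Let $\phi(x_1,\dots,x_k)$ be a non-trivial triple clause. Then there exist $l\ge 1$ and variables $y^i_j\in\{a,b,c\}$ ($1\le i\le l$, $1\le j\le k$) such that the rooted triple formula $\bigwedge_{i=1}^{l}\phi(y^i_1,\dots,y^i_k)$ is logically equivalent to $ab|c$, i.e., it is satisfied by exactly the same pairs $(T,\alpha)$ (with $\alpha$ defined on $\{a,b,c\}$) as the literal $ab|c$.
   Context: A rooted tree $T$ has a distinguished root $r$; leaves are vertices with exactly one neighbour; $u$ lies strictly below $v$ if the path from $u$ to $r$ passes through $v$ and $u\neq v$; $\mathrm{yca}(u,v)$ is the vertex of maximal distance from $r$ above both $u$ and $v$; $T$ is binary if the root has two neighbours and every other vertex three or one. A triple clause is a disjunction of literals $xy|z$. A literal $xy|z$ is satisfied by $(T,\alpha)$ ($T$ rooted binary, $\alpha$ maps variables to leaves) if $\alpha(x),\alpha(y),\alpha(z)$ are pairwise distinct and $\mathrm{yca}(\alpha(x),\alpha(y))$ lies strictly below $\mathrm{yca}(\alpha(x),\alpha(z))$; a clause is satisfied if one of its literals is. Convention: clauses contain no literals of the forms $xx|y$, $xy|x$, $xy|y$. A triple clause is trivial if it is satisfied by every injective map of its variables into the leaves of every rooted binary tree. *)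

theory Defs
  imports Main "HOL-Library.Sublist"
begin

text \<open>Rooted trees are represented concretely: vertices are addresses (bool lists),
  the root is the empty address, and a tree is a finite prefix-closed set of addresses.
  Every finite rooted tree in which each vertex has at most two children is isomorphic
  to such a set; rooted binary trees in particular.\<close>

definition rooted_tree :: "bool list set \<Rightarrow> bool" where
  "rooted_tree T \<longleftrightarrow> finite T \<and> [] \<in> T \<and> (\<forall>u\<in>T. \<forall>w. prefix w u \<longrightarrow> w \<in> T)"

definition nbrs :: "bool list set \<Rightarrow> bool list \<Rightarrow> bool list set" where
  "nbrs T u = {v \<in> T. \<exists>b. v = u @ [b] \<or> u = v @ [b]}"

definition is_leaf :: "bool list set \<Rightarrow> bool list \<Rightarrow> bool" where
  "is_leaf T u \<longleftrightarrow> u \<in> T \<and> card (nbrs T u) = 1"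

definition binary_tree :: "bool list set \<Rightarrow> bool" where
  "binary_tree T \<longleftrightarrow> rooted_tree T \<and> card (nbrs T []) = 2 \<and>
     (\<forall>u\<in>T - {[]}. card (nbrs T u) = 1 \<or> card (nbrs T u) = 3)"

text \<open>The path from u to the root passes through v iff v is a prefix of u.\<close>
definition strictly_below :: "bool list set \<Rightarrow> bool list \<Rightarrow> bool list \<Rightarrow> bool" where
  "strictly_below T u v \<longleftrightarrow> u \<in> T \<and> v \<in> T \<and> prefix v u \<and> u \<noteq> v"

definition yca :: "bool list set \<Rightarrow> bool list \<Rightarrow> bool list \<Rightarrow> bool list" where
  "yca T u v = (ARG_MAX length w. w \<in> T \<and> prefix w u \<and> prefix w v)"

type_synonym 'v literal = "'v \<times> 'v \<times> 'v"   \<comment> \<open>(x,y,z) stands for xy|z\<close>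
type_synonym 'v clause = "'v literal list"

definition sat_lit :: "bool list set \<Rightarrow> ('v \<Rightarrow> bool list) \<Rightarrow> 'v literal \<Rightarrow> bool" where
  "sat_lit T \<alpha> l = (case l of (x, y, z) \<Rightarrow>
     \<alpha> x \<noteq> \<alpha> y \<and> \<alpha> x \<noteq> \<alpha> z \<and> \<alpha> y \<noteq> \<alpha> z \<and>
     strictly_below T (yca T (\<alpha> x) (\<alpha> y)) (yca T (\<alpha> x) (\<alpha> z)))"

definition sat_clause :: "bool list set \<Rightarrow> ('v \<Rightarrow> bool list) \<Rightarrow> 'v clause \<Rightarrow> bool" where
  "sat_clause T \<alpha> C \<longleftrightarrow> (\<exists>l\<in>set C. sat_lit T \<alpha> l)"

definition clause_vars :: "'v clause \<Rightarrow> 'v set" where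
  "clause_vars C = (\<Union>(x, y, z)\<in>set C. {x, y, z})"

definition trivial_clause :: "'v clause \<Rightarrow> bool" where
  "trivial_clause C \<longleftrightarrow> (\<forall>T \<alpha>. binary_tree T \<longrightarrow> inj_on \<alpha> (clause_vars C) \<longrightarrow>
      (\<forall>x\<in>clause_vars C. is_leaf T (\<alpha> x)) \<longrightarrow> sat_clause T \<alpha> C)"

definition subst_clause :: "('v \<Rightarrow> 'w) \<Rightarrow> 'v clause \<Rightarrow> 'w clause" where
  "subst_clause \<sigma> C = map (\<lambda>(x, y, z). (\<sigma> x, \<sigma> y, \<sigma> z)) C"

datatype abc = A | B | C

end

theory Submission
  imports Defs
begin

abbreviation L where "L \<equiv> longest_common_prefix"

lemma lcp_sym: "L u v = L v u"
  by (induction u v rule: longest_common_prefix.induct) auto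

lemma lcp_append: "L (w @ xs) (w @ ys) = w @ L xs ys"
  by (induction w) auto

lemma yca_lcp:
  assumes "rooted_tree T" "u \<in> T"
  shows "yca T u v = L u v"
proof -
  let ?P = "\<lambda>w. w \<in> T \<and> prefix w u \<and> prefix w v"
  have PL: "?P (L u v)" using assms
    by (auto simp: rooted_tree_def longest_common_prefix_prefix1 longest_common_prefix_prefix2)
  have "?P (yca T u v) \<and> (\<forall>y. ?P y \<longrightarrow> \<not> length y > length (yca T u v))"
    unfolding yca_def
    apply (rule arg_maxI[where P = ?P and x = "L u v"])
    using PL apply blast
     apply (meson longest_common_prefix_max_prefix not_le prefix_length_le)
    by blast
  then have "prefix (yca T u v) (L u v)" "length (L u v) \<le> length (yca T u v)"
    using PL longest_common_prefix_max_prefix not_le by blast+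
  then show ?thesis
    proof -
    have "prefix (L u v) (L u v)" by simp
    have "prefix (L u v) (yca T u v)"
      using prefix_length_prefix[OF \<open>prefix (L u v) (L u v)\<close> \<open>prefix (yca T u v) (L u v)\<close>] \<open>length (L u v) \<le> length (yca T u v)\<close> by blast
    then show ?thesis using \<open>prefix (yca T u v) (L u v)\<close> by (rule prefix_order.antisym[symmetric])
  qed
qed

lemma leaf_max:
  assumes "binary_tree T" "is_leaf T p" "prefix p v" "v \<in> T"
  shows "v = p"
proof (rule ccontr)
  assume "v \<noteq> p"
  then obtain b r where v: "v = p @ b # r" using assms(3)
    by (metis append_Nil2 neq_Nil_conv prefix_def)
  have rt: "rooted_tree T" using assms(1) by (simp add: binary_tree_def)
  have pb: "p @ [b] \<in> T" using rt assms(4) v unfolding rooted_tree_def by auto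
  have pT: "p \<in> T" using assms(2) by (simp add: is_leaf_def)
  have fin: "finite (nbrs T p)" using rt by (simp add: rooted_tree_def nbrs_def)
  show False
  proof (cases "p = []")
    case True
    then show ?thesis using assms(1,2) by (simp add: binary_tree_def is_leaf_def)
  next
    case False
    have pe: "p = butlast p @ [last p]" using False by simp
    then have "prefix (butlast p) p" by (metis prefixI)
    then have bl: "butlast p \<in> T" using rt pT unfolding rooted_tree_def by blast
    have "butlast p \<in> nbrs T p" using bl pe unfolding nbrs_def by blast
    moreover have "p @ [b] \<in> nbrs T p" using pb unfolding nbrs_def by auto
    moreover have "length (butlast p) \<noteq> length (p @ [b])" by simp
    then have ne: "butlast p \<noteq> p @ [b]" by metis
    ultimately have sub: "{butlast p, p @ [b]} \<subseteq> nbrs T p" by blast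
    have "card {butlast p, p @ [b]} = 2" using ne by simp
    then have "card (nbrs T p) \<ge> 2" using card_mono[OF fin sub] by simp
    then show ?thesis using assms(2) by (simp add: is_leaf_def)
  qed
qed

lemma yca_sym: "yca T u v = yca T v u"
  unfolding yca_def by (simp add: conj_commute conj_left_commute)

lemmas lcp1 = longest_common_prefix_prefix1
lemmas lcp2 = longest_common_prefix_prefix2
lemmas lcpmax = longest_common_prefix_max_prefix

lemma ult:
  assumes "strict_prefix (L p r) (L p q)"
  shows "L q r = L p r"
proof -
  have a: "prefix (L p r) q" using assms lcp2[of p q]
    by (meson prefix_order.dual_order.trans strict_prefix_def)
  have b: "prefix (L p r) (L q r)" using a lcp2[of p r] lcpmax by blast
  have "prefix (L q r) (L p q) \<or> prefix (L p q) (L q r)"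
    using prefix_same_cases[OF lcp1[of q r] lcp2[of p q]] .
  moreover have "\<not> prefix (L p q) (L q r)"
  proof
    assume h: "prefix (L p q) (L q r)"
    have "prefix (L p q) r" using h lcp2[of q r] by (rule prefix_order.trans)
    then have "prefix (L p q) (L p r)" using lcp1[of p q] lcpmax by blast
    then show False using assms prefix_order.antisym unfolding strict_prefix_def by blast
  qed
  ultimately have "prefix (L q r) (L p q)" by blast
  then have "prefix (L q r) p" using lcp1[of p q] by (rule prefix_order.trans)
  then have "prefix (L q r) (L p r)" using lcp2[of q r] lcpmax by blast
  then show ?thesis using b by (rule prefix_order.antisym)
qed

lemma sat_lit_L:
  assumes "rooted_tree T" "\<alpha> x \<in> T"
  shows "sat_lit T \<alpha> (x, y, z) \<longleftrightarrow> \<alpha> x \<noteq> \<alpha> y \<and> \<alpha> x \<noteq> \<alpha> z \<and> \<alpha> y \<noteq> \<alpha> z \<and>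
      strict_prefix (L (\<alpha> x) (\<alpha> z)) (L (\<alpha> x) (\<alpha> y))"
proof -
  have "L (\<alpha> x) w \<in> T" for w using assms lcp1[of "\<alpha> x" w] unfolding rooted_tree_def by blast
  then show ?thesis using assms
    unfolding sat_lit_def strictly_below_def strict_prefix_def
    by (simp only: yca_lcp[OF assms] prod.case) auto
qed

lemma sat_lit_swap:
  assumes "rooted_tree T" "\<alpha> x \<in> T" "\<alpha> y \<in> T"
  shows "sat_lit T \<alpha> (x, y, z) = sat_lit T \<alpha> (y, x, z)"
  unfolding sat_lit_L[of T \<alpha> x y z, OF assms(1,2)] sat_lit_L[of T \<alpha> y x z, OF assms(1,3)]
  using ult[of "\<alpha> x" "\<alpha> z" "\<alpha> y"] ult[of "\<alpha> y" "\<alpha> z" "\<alpha> x"] lcp_sym[of "\<alpha> x" "\<alpha> y"]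
  by metis

definition out :: "bool list set \<Rightarrow> (abc \<Rightarrow> bool list) \<Rightarrow> abc \<Rightarrow> bool" where
  "out T \<alpha> R = (case R of A \<Rightarrow> sat_lit T \<alpha> (B, C, A) | B \<Rightarrow> sat_lit T \<alpha> (A, C, B)
     | C \<Rightarrow> sat_lit T \<alpha> (A, B, C))"

lemma sat_lit_degen: "x = y \<or> x = z \<or> y = z \<Longrightarrow> \<not> sat_lit T \<alpha> (x, y, z)"
  unfolding sat_lit_def by auto

lemma sat_abc:
  assumes "rooted_tree T" "\<forall>v. \<alpha> v \<in> T"
  shows "sat_lit T \<alpha> (P, Q, R) \<longleftrightarrow> P \<noteq> Q \<and> P \<noteq> R \<and> Q \<noteq> R \<and> out T \<alpha> R"
proof -
  have sw: "\<And>x y z. sat_lit T \<alpha> (x, y, z) = sat_lit T \<alpha> (y, x, z)"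
    by (rule sat_lit_swap[of T \<alpha>, OF assms(1) spec[OF assms(2)] spec[OF assms(2)]])
  have i1: "sat_lit T \<alpha> (C, B, A) = sat_lit T \<alpha> (B, C, A)" by (rule sw)
  have i2: "sat_lit T \<alpha> (C, A, B) = sat_lit T \<alpha> (A, C, B)" by (rule sw)
  have i3: "sat_lit T \<alpha> (B, A, C) = sat_lit T \<alpha> (A, B, C)" by (rule sw)
  show ?thesis
  proof (cases "P \<noteq> Q \<and> P \<noteq> R \<and> Q \<noteq> R")
    case False
    then show ?thesis using sat_lit_degen[of P Q R T \<alpha>] by blast
  next
    case True
    then show ?thesis
      by (cases P; cases Q; cases R) (simp_all only: out_def abc.case i1 i2 i3 simp_thms abc.distinct)
  qed
qed

lemma not_AB:
  assumes "rooted_tree T" "\<forall>v. \<alpha> v \<in> T" "out T \<alpha> A" "out T \<alpha> B"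
  shows False
proof -
  let ?a = "\<alpha> A" and ?b = "\<alpha> B" and ?c = "\<alpha> C"
  have h1: "strict_prefix (L ?b ?a) (L ?b ?c)"
    using assms(3) sat_lit_L[of T \<alpha> B C A] assms(1,2) by (simp add: out_def)
  have h2: "strict_prefix (L ?a ?b) (L ?a ?c)"
    using assms(4) sat_lit_L[of T \<alpha> A C B] assms(1,2) by (simp add: out_def)
  have "prefix (L ?a ?c) (L ?b ?c) \<or> prefix (L ?b ?c) (L ?a ?c)"
    using prefix_same_cases[OF lcp2[of ?a ?c] lcp2[of ?b ?c]] .
  then show False
  proof
    assume "prefix (L ?a ?c) (L ?b ?c)"
    then have "prefix (L ?a ?c) ?b" using lcp1[of ?b ?c] by (rule prefix_order.trans)
    then have "prefix (L ?a ?c) (L ?a ?b)" using lcp1[of ?a ?c] lcpmax by blast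
    then show False using h2 prefix_order.antisym unfolding strict_prefix_def by blast
  next
    assume "prefix (L ?b ?c) (L ?a ?c)"
    then have "prefix (L ?b ?c) ?a" using lcp1[of ?a ?c] by (rule prefix_order.trans)
    then have "prefix (L ?b ?c) (L ?b ?a)" using lcp1[of ?b ?c] lcpmax by blast
    then show False using h1 prefix_order.antisym unfolding strict_prefix_def by blast
  qed
qed

lemma sat_clause_subst:
  "sat_clause T \<alpha> (subst_clause \<sigma> \<phi>) \<longleftrightarrow> (\<exists>(x, y, z)\<in>set \<phi>. sat_lit T \<alpha> (\<sigma> x, \<sigma> y, \<sigma> z))"
  unfolding sat_clause_def subst_clause_def by (force split: prod.splits)

lemma lcp_split:
  assumes "\<not> strict_prefix a c" "\<not> strict_prefix c a" "a \<noteq> c"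
  shows "\<exists>b a' c'. a = L a c @ (\<not> b) # a' \<and> c = L a c @ b # c'"
proof -
  obtain a1 where a1: "a = L a c @ a1" using lcp1[of a c] prefix_def by blast
  obtain c1 where c1: "c = L a c @ c1" using lcp2[of a c] prefix_def by blast
  have "L a c = L a c @ L a1 c1" using lcp_append[of "L a c" a1 c1] a1 c1 by simp
  then have e: "L a1 c1 = []" by simp
  have "a1 \<noteq> []" using a1 c1 assms unfolding strict_prefix_def by auto
  moreover have "c1 \<noteq> []" using a1 c1 assms unfolding strict_prefix_def by auto
  ultimately obtain x a' y c' where "a1 = x # a'" "c1 = y # c'" by (meson neq_Nil_conv)
  moreover have "x \<noteq> y" using e calculation by (auto split: if_splits)
  ultimately have "x = (\<not> y)" "a = L a c @ x # a'" "c = L a c @ y # c'" using a1 c1 by auto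
  then show ?thesis by (intro exI[of _ y] exI[of _ a'] exI[of _ c']) simp
qed

lemma pick:
  fixes p q r :: "bool list"
  assumes np: "\<And>a c. a \<in> {p, q, r} \<Longrightarrow> c \<in> {p, q, r} \<Longrightarrow> \<not> strict_prefix a c"
    and d: "p \<noteq> q" "p \<noteq> r" "q \<noteq> r"
    and ns: "\<not> strict_prefix (L p r) (L p q)"
  shows "\<not> prefix (L p r) q \<or> \<not> prefix (L q r) p"
proof -
  have cmp: "prefix (L p q) (L p r) \<or> prefix (L p r) (L p q)"
    using prefix_same_cases[OF lcp1[of p q] lcp1[of p r]] .
  show ?thesis
  proof (cases "strict_prefix (L p q) (L p r)")
    case True
    have "\<not> prefix (L p r) q"
    proof
      assume "prefix (L p r) q"
      then have "prefix (L p r) (L p q)" using lcp1[of p r] lcpmax by blast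
      then show False using True prefix_order.antisym unfolding strict_prefix_def by blast
    qed
    then show ?thesis by blast
  next
    case False
    then have w: "L p q = L p r" using cmp ns unfolding strict_prefix_def by auto
    have "\<not> prefix (L q r) p"
    proof
      assume h: "prefix (L q r) p"
      obtain b1 p' b2 q' where s1: "p = L p q @ (\<not> b1) # p'" "q = L p q @ b1 # q'"
        using lcp_split[of p q] np d by auto
      obtain b3 r' b4 q'' where s2: "q = L q r @ (\<not> b3) # q''" "r = L q r @ b3 # r'"
        using lcp_split[of q r] np d by auto
      obtain b5 p'' b6 r'' where s3: "p = L p r @ (\<not> b5) # p''" "r = L p r @ b5 # r''"
        using lcp_split[of p r] np d by auto
      have "prefix (L p q) (L q r)" using lcp2[of p q] lcp2[of p r] w lcpmax by metis
      moreover have "prefix (L q r) (L p q)" using h lcp1[of q r] lcpmax by blast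
      ultimately have w2: "L q r = L p q" by (rule prefix_order.antisym[symmetric])
      have "b1 = (\<not> b3)" using s1(2) s2(1) w2 by (metis append_eq_append_conv list.inject)
      moreover have "b1 = b5" using s1(1) s3(1) w by (metis append_eq_append_conv list.inject)
      moreover have "b3 = b5" using s2(2) s3(2) w w2 by (metis append_eq_append_conv list.inject)
      ultimately show False by simp
    qed
    then show ?thesis by blast
  qed
qed

lemma hom_lit:
  fixes a1 a2 a3 u :: "bool list"
  assumes np: "\<And>w. prefix a3 w \<Longrightarrow> w = a1 \<Longrightarrow> w = a3"
    and h1: "a1 = u @ c # x1" and h2: "a2 = u @ c' # x2" and cc: "c \<noteq> c'"
    and n3: "\<not> prefix (u @ [True]) a3" "\<not> prefix (u @ [False]) a3"
  shows "strict_prefix (L a1 a3) (L a1 a2)"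
proof -
  have "L a1 a2 = u" using h1 h2 cc lcp_append[of u "c # x1" "c' # x2"] by simp
  moreover have nu: "\<not> prefix u a3"
  proof
    assume "prefix u a3"
    then obtain rest where a3: "a3 = u @ rest" by (auto simp: prefix_def)
    show False
    proof (cases rest)
      case Nil
      then have "prefix a3 a1" using a3 h1 by simp
      then have "a1 = a3" using np by blast
      then show False using a3 h1 Nil by simp
    next
      case (Cons d rest')
      then have "prefix (u @ [d]) a3" using a3 by simp
      then show False using n3 by (cases d) auto
    qed
  qed
  moreover have "prefix u a1" using h1 by simp
  ultimately show ?thesis
    using prefix_same_cases[OF lcp1[of a1 a3], of u] lcp2[of a1 a3]
      prefix_order.trans[of u "L a1 a3" a3] unfolding strict_prefix_def by auto
qed

theorem mainTheorem2:
  fixes \<phi> :: "'v clause"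
  assumes "\<phi> \<noteq> []"
    and "\<forall>(x, y, z)\<in>set \<phi>. x \<noteq> y \<and> x \<noteq> z \<and> y \<noteq> z"
    and "\<not> trivial_clause \<phi>"
  shows "\<exists>\<sigma>s :: ('v \<Rightarrow> abc) list. \<sigma>s \<noteq> [] \<and>
           (\<forall>T (\<alpha> :: abc \<Rightarrow> bool list). binary_tree T \<longrightarrow> (\<forall>v. is_leaf T (\<alpha> v)) \<longrightarrow>
              ((\<forall>\<sigma>\<in>set \<sigma>s. sat_clause T \<alpha> (subst_clause \<sigma> \<phi>)) \<longleftrightarrow> sat_lit T \<alpha> (A, B, C)))"
proof -
  let ?V = "clause_vars \<phi>"
  obtain T \<alpha>0 where bt: "binary_tree T" and inj: "inj_on \<alpha>0 ?V"
    and lf: "\<forall>x\<in>?V. is_leaf T (\<alpha>0 x)" and ns: "\<not> sat_clause T \<alpha>0 \<phi>"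
    using assms(3) unfolding trivial_clause_def by blast
  have rt: "rooted_tree T" using bt by (simp add: binary_tree_def)
  have inV: "a \<in> ?V \<and> b \<in> ?V \<and> c \<in> ?V" if "(a, b, c) \<in> set \<phi>" for a b c
    using that by (force simp: clause_vars_def)
  have dist: "\<alpha>0 a \<noteq> \<alpha>0 b \<and> \<alpha>0 a \<noteq> \<alpha>0 c \<and> \<alpha>0 b \<noteq> \<alpha>0 c" if "(a, b, c) \<in> set \<phi>" for a b c
  proof -
    have "a \<noteq> b \<and> a \<noteq> c \<and> b \<noteq> c" using assms(2) that by fastforce
    then show ?thesis using inV[OF that] inj by (meson inj_onD)
  qed
  have inT: "\<alpha>0 v \<in> T" if "v \<in> ?V" for v using lf that by (simp add: is_leaf_def)
  have lm: "w = \<alpha>0 v" if "v \<in> ?V" "prefix (\<alpha>0 v) w" "w \<in> T" for v w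
    using leaf_max[OF bt _ that(2,3)] lf that(1) by blast
  have nsl: "\<not> sat_lit T \<alpha>0 (a, b, c)" if "(a, b, c) \<in> set \<phi>" for a b c
    using ns that unfolding sat_clause_def by blast
  obtain l where l: "l \<in> set \<phi>" using assms(1) last_in_set by blast
  obtain x y z where lxyz: "l = (x, y, z)" by (rule prod_cases3)
  have lit: "(x, y, z) \<in> set \<phi>" using l lxyz by simp
  note xyz = inV[OF lit]
  have nsp0: "\<not> strict_prefix a c" if ha: "a \<in> \<alpha>0 ` ?V" and hc: "c \<in> \<alpha>0 ` ?V" for a c
  proof
    assume sp: "strict_prefix a c"
    obtain v where v: "v \<in> ?V" "a = \<alpha>0 v" using ha by blast
    obtain v' where v': "v' \<in> ?V" "c = \<alpha>0 v'" using hc by blast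
    have "c = a" using lm[OF v(1), of c] sp v v' inT unfolding strict_prefix_def by blast
    then show False using sp by simp
  qed
  have np: "\<not> strict_prefix a c" if "a \<in> {\<alpha>0 x, \<alpha>0 y, \<alpha>0 z}" "c \<in> {\<alpha>0 x, \<alpha>0 y, \<alpha>0 z}" for a c
    using nsp0 that xyz by blast
  have nsp: "\<not> strict_prefix (L (\<alpha>0 x) (\<alpha>0 z)) (L (\<alpha>0 x) (\<alpha>0 y))"
  proof -
    have "\<alpha>0 x \<in> T" using inT xyz by blast
    then show ?thesis using nsl[OF lit] sat_lit_L[of T \<alpha>0 x y z, OF rt] dist[OF lit] by blast
  qed
  have "\<not> prefix (L (\<alpha>0 x) (\<alpha>0 z)) (\<alpha>0 y) \<or> \<not> prefix (L (\<alpha>0 y) (\<alpha>0 z)) (\<alpha>0 x)"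
    using pick[OF np _ _ _ nsp] dist[OF lit] by blast
  then obtain s t where st: "(s = x \<and> t = y) \<or> (s = y \<and> t = x)"
    and nt: "\<not> prefix (L (\<alpha>0 s) (\<alpha>0 z)) (\<alpha>0 t)" by blast
  have sV: "s \<in> ?V" and tV: "t \<in> ?V" using st xyz by auto
  have dsz: "\<alpha>0 s \<noteq> \<alpha>0 z" using st dist[OF lit] by auto
  define u where "u = L (\<alpha>0 s) (\<alpha>0 z)"
  obtain b s' r' where su: "\<alpha>0 s = u @ (\<not> b) # s'" and ru: "\<alpha>0 z = u @ b # r'"
    using lcp_split[OF nsp0 nsp0 dsz] sV xyz unfolding u_def by blast
  define \<sigma>0 where "\<sigma>0 v = (if prefix (u @ [b]) (\<alpha>0 v) then A
      else if prefix (u @ [\<not> b]) (\<alpha>0 v) then B else C)" for v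
  have \<sigma>z: "\<sigma>0 z = A" using ru by (simp add: \<sigma>0_def)
  have \<sigma>s: "\<sigma>0 s = B" using su by (simp add: \<sigma>0_def)
  have \<sigma>t: "\<sigma>0 t = C"
  proof -
    have "\<not> prefix (u @ [d]) (\<alpha>0 t)" for d
      using nt prefix_order.trans[of u "u @ [d]" "\<alpha>0 t"] unfolding u_def by auto
    then show ?thesis by (simp add: \<sigma>0_def)
  qed
  have hom: False if l1: "(a1, a2, a3) \<in> set \<phi>" and c3: "\<sigma>0 a3 = C"
    and d12: "\<sigma>0 a1 \<noteq> \<sigma>0 a2" and c1: "\<sigma>0 a1 \<noteq> C" and c2: "\<sigma>0 a2 \<noteq> C" for a1 a2 a3
  proof -
    note vs = inV[OF l1]
    have n3: "\<not> prefix (u @ [True]) (\<alpha>0 a3)" "\<not> prefix (u @ [False]) (\<alpha>0 a3)"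
      using c3 by (cases b; auto simp: \<sigma>0_def split: if_splits)+
    have np3: "w = \<alpha>0 a3" if "prefix (\<alpha>0 a3) w" "w = \<alpha>0 a1" for w
      using lm[of a3 w] vs that inT by blast
    have "\<exists>c c' x1 x2. c \<noteq> c' \<and> \<alpha>0 a1 = u @ c # x1 \<and> \<alpha>0 a2 = u @ c' # x2"
    proof (cases "\<sigma>0 a1 = A")
      case True
      then have "\<sigma>0 a2 = B" using d12 c2 by (cases "\<sigma>0 a2") auto
      then have "prefix (u @ [\<not> b]) (\<alpha>0 a2)" by (auto simp: \<sigma>0_def split: if_splits)
      moreover have "prefix (u @ [b]) (\<alpha>0 a1)" using True by (auto simp: \<sigma>0_def split: if_splits)
      ultimately show ?thesis by (auto simp: prefix_def)
    next
      case False
      then have "\<sigma>0 a1 = B" using c1 by (cases "\<sigma>0 a1") auto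
      then have "\<sigma>0 a2 = A" using d12 c2 by (cases "\<sigma>0 a2") auto
      then have "prefix (u @ [b]) (\<alpha>0 a2)" by (auto simp: \<sigma>0_def split: if_splits)
      moreover have "prefix (u @ [\<not> b]) (\<alpha>0 a1)" using \<open>\<sigma>0 a1 = B\<close>
        by (auto simp: \<sigma>0_def split: if_splits)
      ultimately show ?thesis by (auto simp: prefix_def)
    qed
    then obtain c c' x1 x2 where "c \<noteq> c'" "\<alpha>0 a1 = u @ c # x1" "\<alpha>0 a2 = u @ c' # x2" by blast
    then have "strict_prefix (L (\<alpha>0 a1) (\<alpha>0 a3)) (L (\<alpha>0 a1) (\<alpha>0 a2))"
      using hom_lit[OF np3 _ _ _ n3] by blast
    then have "sat_lit T \<alpha>0 (a1, a2, a3)"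
      using sat_lit_L[of T \<alpha>0 a1 a2 a3, OF rt] inT vs dist[OF l1] by blast
    then show False using nsl[OF l1] by blast
  qed
  define \<pi>1 :: "abc \<Rightarrow> abc" where "\<pi>1 X = (case X of A \<Rightarrow> C | B \<Rightarrow> A | C \<Rightarrow> B)" for X
  define \<pi>2 :: "abc \<Rightarrow> abc" where "\<pi>2 X = (case X of A \<Rightarrow> C | B \<Rightarrow> B | C \<Rightarrow> A)" for X
  have key: "\<exists>(a1, a2, a3)\<in>set \<phi>. \<pi> (\<sigma>0 a1) \<noteq> \<pi> (\<sigma>0 a2) \<and> \<pi> (\<sigma>0 a1) \<noteq> \<pi> (\<sigma>0 a3)
      \<and> \<pi> (\<sigma>0 a2) \<noteq> \<pi> (\<sigma>0 a3) \<and> \<pi> (\<sigma>0 a3) = C"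
    if "\<pi> = \<pi>1 \<or> \<pi> = \<pi>2" for \<pi>
    using lit st \<sigma>z \<sigma>s \<sigma>t that unfolding \<pi>1_def \<pi>2_def by (auto intro!: bexI[OF _ lit])
  have bk: "\<pi> (\<sigma>0 a3) = C \<or> \<pi> (\<sigma>0 a3) = \<pi> A \<or> \<pi> (\<sigma>0 a3) = \<pi> B"
    if "(a1, a2, a3) \<in> set \<phi>" "\<pi> (\<sigma>0 a1) \<noteq> \<pi> (\<sigma>0 a2)" "\<pi> (\<sigma>0 a1) \<noteq> \<pi> (\<sigma>0 a3)"
       "\<pi> (\<sigma>0 a2) \<noteq> \<pi> (\<sigma>0 a3)" for \<pi> a1 a2 a3
  proof -
    have "\<sigma>0 a3 \<noteq> C"
    proof
      assume h: "\<sigma>0 a3 = C"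
      show False
        using hom[OF that(1) h] that(2-4) h by metis
    qed
    then show ?thesis by (cases "\<sigma>0 a3") auto
  qed
  show ?thesis
  proof (intro exI[of _ "[\<pi>1 \<circ> \<sigma>0, \<pi>2 \<circ> \<sigma>0]"] conjI allI impI)
    fix T' :: "bool list set" and \<alpha> :: "abc \<Rightarrow> bool list"
    assume bt': "binary_tree T'" and lf': "\<forall>v. is_leaf T' (\<alpha> v)"
    have rt': "rooted_tree T'" using bt' by (simp add: binary_tree_def)
    have inT': "\<forall>v. \<alpha> v \<in> T'" using lf' by (simp add: is_leaf_def)
    note sa = sat_abc[OF rt' inT']
    have outC: "sat_lit T' \<alpha> (A, B, C) \<longleftrightarrow> out T' \<alpha> C" using sa by simp
    show "(\<forall>\<sigma>\<in>set [\<pi>1 \<circ> \<sigma>0, \<pi>2 \<circ> \<sigma>0]. sat_clause T' \<alpha> (subst_clause \<sigma> \<phi>)) \<longleftrightarrow>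
        sat_lit T' \<alpha> (A, B, C)"
    proof
      assume h: "\<forall>\<sigma>\<in>set [\<pi>1 \<circ> \<sigma>0, \<pi>2 \<circ> \<sigma>0]. sat_clause T' \<alpha> (subst_clause \<sigma> \<phi>)"
      have g: "out T' \<alpha> (\<pi> (\<sigma>0 a3))" "(a1, a2, a3) \<in> set \<phi>" "\<pi> (\<sigma>0 a1) \<noteq> \<pi> (\<sigma>0 a2)"
          "\<pi> (\<sigma>0 a1) \<noteq> \<pi> (\<sigma>0 a3)" "\<pi> (\<sigma>0 a2) \<noteq> \<pi> (\<sigma>0 a3)"
        if "sat_lit T' \<alpha> (\<pi> (\<sigma>0 a1), \<pi> (\<sigma>0 a2), \<pi> (\<sigma>0 a3))" "(a1, a2, a3) \<in> set \<phi>"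
        for \<pi> a1 a2 a3 using that sa by auto
      obtain a1 a2 a3 where 1: "(a1, a2, a3) \<in> set \<phi>"
        "sat_lit T' \<alpha> (\<pi>1 (\<sigma>0 a1), \<pi>1 (\<sigma>0 a2), \<pi>1 (\<sigma>0 a3))"
        using h by (auto simp: sat_clause_subst)
      obtain b1 b2 b3 where 2: "(b1, b2, b3) \<in> set \<phi>"
        "sat_lit T' \<alpha> (\<pi>2 (\<sigma>0 b1), \<pi>2 (\<sigma>0 b2), \<pi>2 (\<sigma>0 b3))"
        using h by (auto simp: sat_clause_subst)
      have o1: "out T' \<alpha> C \<or> out T' \<alpha> A"
        using g[OF 1(2,1)] bk[of a1 a2 a3 \<pi>1] by (auto simp: \<pi>1_def)
      have o2: "out T' \<alpha> C \<or> out T' \<alpha> B"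
        using g[OF 2(2,1)] bk[of b1 b2 b3 \<pi>2] by (auto simp: \<pi>2_def)
      show "sat_lit T' \<alpha> (A, B, C)" using o1 o2 not_AB[OF rt' inT'] outC by blast
    next
      assume "sat_lit T' \<alpha> (A, B, C)"
      then have oc: "out T' \<alpha> C" using outC by simp
      show "\<forall>\<sigma>\<in>set [\<pi>1 \<circ> \<sigma>0, \<pi>2 \<circ> \<sigma>0]. sat_clause T' \<alpha> (subst_clause \<sigma> \<phi>)"
      proof
        fix \<sigma> assume "\<sigma> \<in> set [\<pi>1 \<circ> \<sigma>0, \<pi>2 \<circ> \<sigma>0]"
        then obtain \<pi> where \<pi>: "\<pi> = \<pi>1 \<or> \<pi> = \<pi>2" "\<sigma> = \<pi> \<circ> \<sigma>0" by auto
        obtain a1 a2 a3 where "(a1, a2, a3) \<in> set \<phi>" "\<pi> (\<sigma>0 a1) \<noteq> \<pi> (\<sigma>0 a2)"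
          "\<pi> (\<sigma>0 a1) \<noteq> \<pi> (\<sigma>0 a3)" "\<pi> (\<sigma>0 a2) \<noteq> \<pi> (\<sigma>0 a3)" "\<pi> (\<sigma>0 a3) = C"
          using key[OF \<pi>(1)] by blast
        then show "sat_clause T' \<alpha> (subst_clause \<sigma> \<phi>)"
          unfolding sat_clause_subst \<pi>(2) using sa oc by fastforce
      qed
    qed
  qed simp
qed

end
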